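(* Let $\beta=(\pi_\ell)_{\ell=1}^L$ be a chainable architecture. The redundancy removal procedure applied to $\beta$ stops after finitely many iterations and returns an architecture $\beta'$ such that: (1) $\beta'$ is chainable and non-redundant, and either $\beta'=(\pi_1*\cdots*\pi_L)$ or $\beta'=(\pi_1*\cdots*\pi_{\ell_1},\ \pi_{\ell_1+1}*\cdots*\pi_{\ell_2},\ \dots,\ \pi_{\ell_p+1}*\cdots*\pi_L)$ for some indices $1\le\ell_1<\cdots<\ell_p<L$ with $p\in\{1,\dots,L-1\}$; (2) $\mathcal{B}^{\beta'}=\mathcal{B}^\beta$; (3) $\|\beta'\|_0\le\|\beta\|_0$.
   Context: A pattern is a tuple $\pi=(a,b,c,d)$ of positive integers; $\mathbf{S}_\pi:=\mathbf{I}_a\otimes\mathbf{1}_{b\times c}\otimes\mathbf{I}_d\in\{0,1\}^{abd\times acd}$. A $\pi$-factor is a complex $abd\times acd$ matrix with support contained in that of $\mathbf{S}_\pi$. Patterns $\pi_1=(a_1,b_1,c_1,d_1),\pi_2=(a_2,b_2,c_2,d_2)$ are chainable if $a_1c_1/a_2=b_2d_2/d_1=:r(\pi_1,\pi_2)$ is an integer, $a_1\mid a_2$, $d_2\mid d_1$; then $\pi_1*\pi_2:=(a_1,b_1d_1/d_2,a_2c_2/a_1,d_2)$. A chainable pair is redundant if $r(\pi_1,\pi_2)\ge\min(b_1,c_2)$. An architecture $\beta=(\pi_\ell)_{\ell=1}^L$ is a sequence of patterns with $a_\ell c_\ell d_\ell=a_{\ell+1}b_{\ell+1}d_{\ell+1}$;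 it is chainable if every consecutive pair is chainable (depth $1$: chainable by convention), and a chainable architecture is redundant if some consecutive pair $(\pi_\ell,\pi_{\ell+1})$ is redundant (depth $1$: non-redundant). $\pi_p*\cdots*\pi_q$ is the iterated product. $\mathcal{B}^\beta:=\{\mathbf{X}_1\cdots\mathbf{X}_L:\mathbf{X}_\ell\text{ a }\pi_\ell\text{-factor}\}$ and $\|\beta\|_0:=\sum_{\ell}a_\ell b_\ell c_\ell d_\ell$. The redundancy removal procedure: set $\beta'\leftarrow\beta$; while $\beta'=(\pi'_\ell)_{\ell=1}^{L'}$ is redundant, choose any $\ell$ such that $(\pi'_\ell,\pi'_{\ell+1})$ is redundant and replace $\beta'$ by $(\pi'_1,\dots,\pi'_{\ell-1},\pi'_\ell*\pi'_{\ell+1},\pi'_{\ell+2},\dots,\pi'_{L'})$; return $\beta'$. *)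

theory Defs
  imports "Jordan_Normal_Form.Matrix"
begin

type_synonym pattern = "nat \<times> nat \<times> nat \<times> nat"
type_synonym architecture = "pattern list"

definition valid_pattern :: "pattern \<Rightarrow> bool" where
  "valid_pattern \<pi> = (case \<pi> of (a,b,c,d) \<Rightarrow> a > 0 \<and> b > 0 \<and> c > 0 \<and> d > 0)"

definition kron :: "'a :: times mat \<Rightarrow> 'a mat \<Rightarrow> 'a mat" where
  "kron A B = mat (dim_row A * dim_row B) (dim_col A * dim_col B)
     (\<lambda>(i,j). A $$ (i div dim_row B, j div dim_col B) * B $$ (i mod dim_row B, j mod dim_col B))"

definition ones_mat :: "nat \<Rightarrow> nat \<Rightarrow> 'a :: one mat" where
  "ones_mat m n = mat m n (\<lambda>_. 1)"

definition S_pat :: "pattern \<Rightarrow> nat mat" where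
  "S_pat \<pi> = (case \<pi> of (a,b,c,d) \<Rightarrow> kron (kron (1\<^sub>m a) (ones_mat b c)) (1\<^sub>m d))"

definition is_factor :: "pattern \<Rightarrow> complex mat \<Rightarrow> bool" where
  "is_factor \<pi> X = (case \<pi> of (a,b,c,d) \<Rightarrow>
      X \<in> carrier_mat (a*b*d) (a*c*d) \<and>
      (\<forall>i < a*b*d. \<forall>j < a*c*d. S_pat \<pi> $$ (i,j) = 0 \<longrightarrow> X $$ (i,j) = 0))"

definition chainable_pair :: "pattern \<Rightarrow> pattern \<Rightarrow> bool" where
  "chainable_pair \<pi>1 \<pi>2 = (case \<pi>1 of (a1,b1,c1,d1) \<Rightarrow> case \<pi>2 of (a2,b2,c2,d2) \<Rightarrow>
      a2 dvd a1*c1 \<and> d1 dvd b2*d2 \<and> a1*c1 div a2 = b2*d2 div d1 \<and> a1 dvd a2 \<and> d2 dvd d1)"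

definition r_pair :: "pattern \<Rightarrow> pattern \<Rightarrow> nat" where
  "r_pair \<pi>1 \<pi>2 = (case \<pi>1 of (a1,b1,c1,d1) \<Rightarrow> case \<pi>2 of (a2,b2,c2,d2) \<Rightarrow> a1*c1 div a2)"

definition star :: "pattern \<Rightarrow> pattern \<Rightarrow> pattern" (infixl "\<star>" 70) where
  "\<pi>1 \<star> \<pi>2 = (case \<pi>1 of (a1,b1,c1,d1) \<Rightarrow> case \<pi>2 of (a2,b2,c2,d2) \<Rightarrow>
      (a1, b1*d1 div d2, a2*c2 div a1, d2))"

definition redundant_pair :: "pattern \<Rightarrow> pattern \<Rightarrow> bool" where
  "redundant_pair \<pi>1 \<pi>2 = (case \<pi>1 of (a1,b1,c1,d1) \<Rightarrow> case \<pi>2 of (a2,b2,c2,d2) \<Rightarrow>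
      chainable_pair \<pi>1 \<pi>2 \<and> r_pair \<pi>1 \<pi>2 \<ge> min b1 c2)"

definition is_architecture :: "architecture \<Rightarrow> bool" where
  "is_architecture \<beta> = (\<beta> \<noteq> [] \<and> (\<forall>\<pi> \<in> set \<beta>. valid_pattern \<pi>) \<and>
     (\<forall>l. Suc l < length \<beta> \<longrightarrow>
        (case \<beta>!l of (a,b,c,d) \<Rightarrow> a*c*d) = (case \<beta>!Suc l of (a,b,c,d) \<Rightarrow> a*b*d)))"

definition chainable_arch :: "architecture \<Rightarrow> bool" where
  "chainable_arch \<beta> = (\<forall>l. Suc l < length \<beta> \<longrightarrow> chainable_pair (\<beta>!l) (\<beta>!Suc l))"

definition redundant_arch :: "architecture \<Rightarrow> bool" where
  "redundant_arch \<beta> = (chainable_arch \<beta> \<and>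
     (\<exists>l. Suc l < length \<beta> \<and> redundant_pair (\<beta>!l) (\<beta>!Suc l)))"

text \<open>Iterated product pi_p * ... * pi_q (left-associated), here for the 0-based
  index range p..<q, i.e. patterns beta!p, ..., beta!(q-1).\<close>
definition iter_star :: "architecture \<Rightarrow> nat \<Rightarrow> nat \<Rightarrow> pattern" where
  "iter_star \<beta> p q = foldl (\<star>) (\<beta>!p) (map (\<lambda>i. \<beta>!i) [Suc p..<q])"

definition mat_prod_list :: "complex mat list \<Rightarrow> complex mat" where
  "mat_prod_list Xs = foldl (*) (hd Xs) (tl Xs)"

definition B_set :: "architecture \<Rightarrow> complex mat set" where
  "B_set \<beta> = {mat_prod_list Xs | Xs. length Xs = length \<beta> \<and>
                 (\<forall>l < length \<beta>. is_factor (\<beta>!l) (Xs!l))}"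

definition norm0 :: "architecture \<Rightarrow> nat" where
  "norm0 \<beta> = sum_list (map (\<lambda>(a,b,c,d). a*b*c*d) \<beta>)"

definition rr_step :: "architecture \<Rightarrow> architecture \<Rightarrow> bool" where
  "rr_step \<beta> \<beta>' = (redundant_arch \<beta> \<and>
     (\<exists>l. Suc l < length \<beta> \<and> redundant_pair (\<beta>!l) (\<beta>!Suc l) \<and>
        \<beta>' = take l \<beta> @ [(\<beta>!l) \<star> (\<beta>!Suc l)] @ drop (Suc (Suc l)) \<beta>))"

end

theory Submission
  imports Defs
begin


lemma kron_entry:
  assumes "i < dim_row A * dim_row B" "j < dim_col A * dim_col B"
  shows "kron A B $$ (i,j) = A $$ (i div dim_row B, j div dim_col B) * B $$ (i mod dim_row B, j mod dim_col B)"
  using assms unfolding kron_def by simp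

lemma kron_dims[simp]: "dim_row (kron A B) = dim_row A * dim_row B" "dim_col (kron A B) = dim_col A * dim_col B"
  unfolding kron_def by simp_all

lemma S_pat_entry:
  assumes "i < a*b*d" "j < a*c*d"
  shows "(S_pat (a,b,c,d) $$ (i,j) \<noteq> 0) = (i div (b*d) = j div (c*d) \<and> i mod d = j mod d)"
proof -
  have d0: "d > 0" using assms by (cases "d=0") auto
  have b0: "b>0" using assms by (cases "b=0") auto
  have c0: "c>0" using assms by (cases "c=0") auto
  have i1: "i div d < a*b" using assms(1) by (simp add: less_mult_imp_div_less)
  have j1: "j div d < a*c" using assms(2) by (simp add: less_mult_imp_div_less)
  have i2: "i div d div b < a" using i1 by (simp add: less_mult_imp_div_less)
  have j2: "j div d div c < a" using j1 by (simp add: less_mult_imp_div_less)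
  have "S_pat (a,b,c,d) $$ (i,j) = (kron (1\<^sub>m a) (ones_mat b c)) $$ (i div d, j div d) * (1\<^sub>m d) $$ (i mod d, j mod d)"
    unfolding S_pat_def using assms by (simp add: kron_entry ones_mat_def)
  also have "\<dots> = (1\<^sub>m a $$ (i div d div b, j div d div c) * (ones_mat b c :: nat mat) $$ (i div d mod b, j div d mod c)) * (1\<^sub>m d) $$ (i mod d, j mod d)"
    using i1 j1 by (simp add: kron_entry ones_mat_def)
  also have "\<dots> = (if i div d div b = j div d div c then 1 else 0) * (if i mod d = j mod d then 1 else 0)"
    using i2 j2 d0 b0 c0 by (simp add: ones_mat_def)
  finally have "S_pat (a,b,c,d) $$ (i,j) = (if i div d div b = j div d div c then 1 else 0) * (if i mod d = j mod d then 1 else 0)" .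
  moreover have "i div (b*d) = i div d div b" "j div (c*d) = j div d div c"
    by (metis div_mult2_eq mult.commute)+
  ultimately show ?thesis by simp
qed

lemma is_factor_iff:
  "is_factor (a,b,c,d) X \<longleftrightarrow> X \<in> carrier_mat (a*b*d) (a*c*d) \<and>
     (\<forall>i < a*b*d. \<forall>j < a*c*d. X $$ (i,j) \<noteq> 0 \<longrightarrow> i div (b*d) = j div (c*d) \<and> i mod d = j mod d)"
proof -
  have "(\<forall>i < a*b*d. \<forall>j < a*c*d. S_pat (a,b,c,d) $$ (i,j) = 0 \<longrightarrow> X $$ (i,j) = 0) \<longleftrightarrow>
    (\<forall>i < a*b*d. \<forall>j < a*c*d. X $$ (i,j) \<noteq> 0 \<longrightarrow> i div (b*d) = j div (c*d) \<and> i mod d = j mod d)"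
    using S_pat_entry by blast
  then show ?thesis unfolding is_factor_def by simp
qed



lemma div3: "(x::nat) div (s*r*(D)) = x div D div r div s"
  by (simp add: div_mult2_eq ac_simps)
lemma div3': "(x::nat) div (t*r*d) = x div (d*t) div r"
proof -
  have "t*r*d = (d*t)*r" by (simp add: ac_simps)
  then show ?thesis by (simp only: div_mult2_eq[of x "d*t" r, symmetric])
qed
lemma recon: "(x::nat) = (x div (b*D) * b + x div D mod b) * D + x mod D"
  by (metis div_mult2_eq div_mult_mod_eq mult.commute)
lemma mr_bound: "(x::nat) < A \<Longrightarrow> y < B \<Longrightarrow> x*B + y < A*B"
proof -
  assume "x < A" "y < B"
  then have "x*B + y < (x+1)*B" by simp
  also have "\<dots> \<le> A*B" using \<open>x<A\<close> by (intro mult_le_mono1) simp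
  finally show ?thesis .
qed
lemma mr_div: "(y::nat) < D \<Longrightarrow> (x*D + y) div D = x"
  by simp
lemma mr_mod: "(y::nat) < D \<Longrightarrow> (x*D + y) mod D = y"
  by simp

lemma mult_entry:
  assumes "X1 \<in> carrier_mat m n" "X2 \<in> carrier_mat n p" "i < m" "k < p"
  shows "(X1*X2) $$ (i,k) = (\<Sum>j<n. X1 $$ (i,j) * X2 $$ (j,k))"
  using assms by (simp add: scalar_prod_def lessThan_atLeast0)

lemma prod_factor:
  fixes X1 X2 :: "complex mat"
  assumes "is_factor (a,b,s*r,d*t) X1" "is_factor (a*s,t*r,c,d) X2"
  shows "is_factor (a,b*t,s*c,d) (X1*X2)"
proof -
  have n: "a*s*(t*r)*d = a*(s*r)*(d*t)" by (simp add: ac_simps)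
  have c1: "X1 \<in> carrier_mat (a*b*(d*t)) (a*(s*r)*(d*t))"
   and s1: "\<And>i j. i < a*b*(d*t) \<Longrightarrow> j < a*(s*r)*(d*t) \<Longrightarrow> X1 $$ (i,j) \<noteq> 0 \<Longrightarrow>
        i div (b*(d*t)) = j div (s*r*(d*t)) \<and> i mod (d*t) = j mod (d*t)"
    using assms(1) unfolding is_factor_iff by auto
  have c2: "X2 \<in> carrier_mat (a*(s*r)*(d*t)) (a*s*c*d)"
   and s2: "\<And>j k. j < a*(s*r)*(d*t) \<Longrightarrow> k < a*s*c*d \<Longrightarrow> X2 $$ (j,k) \<noteq> 0 \<Longrightarrow>
        j div (t*r*d) = k div (c*d) \<and> j mod d = k mod d"
    using assms(2) unfolding is_factor_iff n by auto
  have rows: "a*b*(d*t) = a*(b*t)*d" and cols: "a*s*c*d = a*(s*c)*d" by (simp_all add: ac_simps)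
  have car: "X1*X2 \<in> carrier_mat (a*(b*t)*d) (a*(s*c)*d)"
    using c1 c2 rows cols by (metis mult_carrier_mat)
  show ?thesis unfolding is_factor_iff
  proof (rule conjI[OF car], intro allI impI)
    fix i k assume i: "i < a*(b*t)*d" and k: "k < a*(s*c)*d" and nz: "(X1*X2) $$ (i,k) \<noteq> 0"
    have "(X1*X2) $$ (i,k) = (\<Sum>j<a*(s*r)*(d*t). X1 $$ (i,j) * X2 $$ (j,k))"
      using mult_entry[OF c1 c2] i k rows cols by simp
    with nz obtain j where j: "j < a*(s*r)*(d*t)" and nz2: "X1 $$ (i,j) * X2 $$ (j,k) \<noteq> 0"
      by (metis (no_types, lifting) lessThan_iff sum.neutral)
    have h1: "i div (b*(d*t)) = j div (s*r*(d*t)) \<and> i mod (d*t) = j mod (d*t)"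
      using s1[of i j] i j nz2 rows by auto
    have h2: "j div (t*r*d) = k div (c*d) \<and> j mod d = k mod d"
      using s2[of j k] k j nz2 cols by auto
    have "i div (b*t*d) = i div (b*(d*t))" by (simp add: ac_simps)
    also have "\<dots> = j div (d*t) div r div s" using h1 div3 by simp
    also have "\<dots> = k div (c*d) div s" using h2 div3' by simp
    also have "\<dots> = k div (s*c*d)" by (simp add: div_mult2_eq ac_simps)
    finally show "i div (b*t*d) = k div (s*c*d) \<and> i mod d = k mod d"
      using h1 h2 by (metis mod_mod_cancel dvd_triv_left)
  qed
qed



lemma sum_single:
  fixes f :: "nat \<Rightarrow> complex"
  assumes A: "\<And>j. j < n \<Longrightarrow> f j \<noteq> 0 \<Longrightarrow> j = jz \<and> f j = v"
    and B: "v \<noteq> 0 \<Longrightarrow> jz < n \<and> f jz = v"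
  shows "(\<Sum>j<n. f j) = v"
proof (cases "v = 0")
  case True
  have "f j = 0" if "j \<in> {..<n}" for j
  proof (rule ccontr)
    assume "f j \<noteq> 0" then have "f j = v" using A[of j] that by auto
    then show False using True \<open>f j \<noteq> 0\<close> by simp
  qed
  then show ?thesis using True by simp
next
  case False
  have "f j = (if j = jz then v else 0)" if "j \<in> {..<n}" for j
  proof (cases "f j = 0")
    case True
    then show ?thesis using B False by auto
  next
    case nz: False
    then show ?thesis using A[of j] that nz by auto
  qed
  then have "(\<Sum>j<n. f j) = (\<Sum>j<n. if j = jz then v else 0)" by (rule sum.cong[OF refl])
  also have "\<dots> = v" using B False by simp
  finally show ?thesis .
qed

lemma decomp_b:
  fixes Y :: "complex mat"
  assumes Y: "is_factor (a,b*t,s*c,d) Y" and br: "b \<le> r" and pos: "0<d" "0<t"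
  shows "\<exists>X1 X2. is_factor (a,b,s*r,d*t) X1 \<and> is_factor (a*s,t*r,c,d) X2 \<and> Y = X1*X2"
proof -
  define n where "n = a*(s*r)*(d*t)"
  have n: "a*s*(t*r)*d = n" unfolding n_def by (simp add: ac_simps)
  have rows: "a*(b*t)*d = a*b*(d*t)" and cols: "a*(s*c)*d = a*s*c*d" by (simp_all add: ac_simps)
  have cY: "Y \<in> carrier_mat (a*b*(d*t)) (a*s*c*d)"
   and sY: "\<And>i k. i < a*b*(d*t) \<Longrightarrow> k < a*s*c*d \<Longrightarrow> Y $$ (i,k) \<noteq> 0 \<Longrightarrow>
        i div (b*t*d) = k div (s*c*d) \<and> i mod d = k mod d"
    using Y unfolding is_factor_iff rows cols by auto
  define X1 :: "complex mat" where "X1 = mat (a*b*(d*t)) n (\<lambda>(i,j).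
     if i div (b*(d*t)) = j div (s*r*(d*t)) \<and> i mod (d*t) = j mod (d*t) \<and> j div (d*t) mod r = i div (d*t) mod b then 1 else 0)"
  define X2 :: "complex mat" where "X2 = mat n (a*s*c*d) (\<lambda>(j,k).
     if j div (t*r*d) = k div (c*d) \<and> j mod d = k mod d \<and> j div (d*t) mod r < b
     then Y $$ ((j div (s*r*(d*t)) * b + j div (d*t) mod r) * (d*t) + j mod (d*t), k) else 0)"
  have c1: "X1 \<in> carrier_mat (a*b*(d*t)) n" unfolding X1_def by simp
  have c2: "X2 \<in> carrier_mat n (a*s*c*d)" unfolding X2_def by simp
  have f1: "is_factor (a,b,s*r,d*t) X1"
    unfolding is_factor_iff n_def[symmetric] using c1 by (auto simp: X1_def)
  have f2: "is_factor (a*s,t*r,c,d) X2"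
    unfolding is_factor_iff n using c2 by (auto simp: X2_def)
  have "Y = X1 * X2"
  proof (rule eq_matI)
    show "dim_row Y = dim_row (X1*X2)" "dim_col Y = dim_col (X1*X2)" using cY c1 c2 by auto
    fix i k assume "i < dim_row (X1*X2)" "k < dim_col (X1*X2)"
    then have i: "i < a*b*(d*t)" and k: "k < a*s*c*d" using c1 c2 by auto
    define j0 where "j0 = (k div (c*d) * r + i div (d*t) mod b) * (d*t) + i mod (d*t)"
    have ri: "i = (i div (b*(d*t)) * b + i div (d*t) mod b) * (d*t) + i mod (d*t)" by (rule recon)
    have "(X1*X2) $$ (i,k) = (\<Sum>j<n. X1 $$ (i,j) * X2 $$ (j,k))"
      using mult_entry[OF c1 c2 i k] .
    also have "\<dots> = Y $$ (i,k)"
    proof (rule sum_single[where jz=j0])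
      fix j assume j: "j < n" and nz: "X1 $$ (i,j) * X2 $$ (j,k) \<noteq> 0"
      then have C: "i div (b*(d*t)) = j div (s*r*(d*t))" "i mod (d*t) = j mod (d*t)"
          "j div (d*t) mod r = i div (d*t) mod b" "j div (t*r*d) = k div (c*d)"
          "j mod d = k mod d" "j div (d*t) mod r < b"
        and v: "X1 $$ (i,j) * X2 $$ (j,k) = Y $$ ((j div (s*r*(d*t)) * b + j div (d*t) mod r) * (d*t) + j mod (d*t), k)"
        using i k by (auto simp: X1_def X2_def split: if_splits)
      have "(j div (s*r*(d*t)) * b + j div (d*t) mod r) * (d*t) + j mod (d*t) = i"
        unfolding C(1)[symmetric] C(2)[symmetric] C(3) by (rule ri[symmetric])
      moreover have "j = j0"
      proof -
        have "j = (j div (d*t) div r * r + j div (d*t) mod r) * (d*t) + j mod (d*t)" by (metis div_mult_mod_eq)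
        also have "j div (d*t) div r = k div (c*d)" using C(4) div3' by metis
        finally show ?thesis unfolding j0_def C(2) C(3)[symmetric] .
      qed
      ultimately show "j = j0 \<and> X1 $$ (i,j) * X2 $$ (j,k) = Y $$ (i,k)" using v by simp
    next
      assume nz: "Y $$ (i,k) \<noteq> 0"
      then have S: "i div (b*t*d) = k div (s*c*d)" "i mod d = k mod d" using sY i k by auto
      have K: "k div (c*d) < a*s" using k by (simp add: less_mult_imp_div_less ac_simps)
      have b0: "b > 0" using i by (cases "b=0") auto
      have bb: "i div (d*t) mod b < b" using b0 by simp
      have bl: "i div (d*t) mod b < r" using bb br by linarith
      have ml: "i mod (d*t) < d*t" using pos by simp
      have e1: "j0 div (d*t) = k div (c*d) * r + i div (d*t) mod b" unfolding j0_def by (rule mr_div[OF ml])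
      have e2: "j0 mod (d*t) = i mod (d*t)" unfolding j0_def by (rule mr_mod[OF ml])
      have e3: "j0 div (d*t) mod r = i div (d*t) mod b" using e1 bl by simp
      have e4: "j0 div (d*t) div r = k div (c*d)" using e1 bl by simp
      have j0n: "j0 < n"
      proof -
        have "k div (c*d) * r + i div (d*t) mod b < a*s*r" using mr_bound[OF K bl] by simp
        then have "(k div (c*d) * r + i div (d*t) mod b) * (d*t) + i mod (d*t) < (a*s*r)*(d*t)"
          using mr_bound ml by blast
        then show ?thesis unfolding j0_def n_def by (simp add: ac_simps)
      qed
      have C1: "i div (b*(d*t)) = j0 div (s*r*(d*t))"
      proof -
        have "j0 div (s*r*(d*t)) = k div (c*d) div s" using div3[of j0 s r "d*t"] e4 by simp
        also have "\<dots> = k div (s*c*d)" by (simp add: div_mult2_eq ac_simps)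
        also have "\<dots> = i div (b*(d*t))" using S(1) by (simp add: ac_simps)
        finally show ?thesis by simp
      qed
      have C4: "j0 div (t*r*d) = k div (c*d)" using div3' e4 by metis
      have C5: "j0 mod d = k mod d" using e2 S(2) by (metis mod_mod_cancel dvd_triv_left)
      have X1v: "X1 $$ (i,j0) = 1" unfolding X1_def using i j0n C1 e2 e3 by simp
      have hi: "(j0 div (s*r*(d*t)) * b + j0 div (d*t) mod r) * (d*t) + j0 mod (d*t) = i"
        unfolding C1[symmetric] e2 e3 by (rule ri[symmetric])
      have X2v: "X2 $$ (j0,k) = Y $$ (i,k)" unfolding X2_def using j0n k C4 C5 e3 bb hi
        by simp
      show "j0 < n \<and> X1 $$ (i,j0) * X2 $$ (j0,k) = Y $$ (i,k)" using j0n X1v X2v by simp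
    qed
    finally show "Y $$ (i,k) = (X1*X2) $$ (i,k)" by simp
  qed
  then show ?thesis using f1 f2 by (intro exI[of _ X1] exI[of _ X2]) simp
qed



lemma decomp_c:
  fixes Y :: "complex mat"
  assumes Y: "is_factor (a,b*t,s*c,d) Y" and cr: "c \<le> r" and pos: "0<d" "0<t"
  shows "\<exists>X1 X2. is_factor (a,b,s*r,d*t) X1 \<and> is_factor (a*s,t*r,c,d) X2 \<and> Y = X1*X2"
proof -
  define n where "n = a*(s*r)*(d*t)"
  have n: "a*s*(t*r)*d = n" unfolding n_def by (simp add: ac_simps)
  have rows: "a*(b*t)*d = a*b*(d*t)" and cols: "a*(s*c)*d = a*s*c*d" by (simp_all add: ac_simps)
  have cY: "Y \<in> carrier_mat (a*b*(d*t)) (a*s*c*d)"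
   and sY: "\<And>i k. i < a*b*(d*t) \<Longrightarrow> k < a*s*c*d \<Longrightarrow> Y $$ (i,k) \<noteq> 0 \<Longrightarrow>
        i div (b*t*d) = k div (s*c*d) \<and> i mod d = k mod d"
    using Y unfolding is_factor_iff rows cols by auto
  define X1 :: "complex mat" where "X1 = mat (a*b*(d*t)) n (\<lambda>(i,j).
     if i div (b*(d*t)) = j div (s*r*(d*t)) \<and> i mod (d*t) = j mod (d*t) \<and> j div (d*t) mod r < c
     then Y $$ (i, (j div (t*r*d) * c + j div (d*t) mod r) * d + j mod d) else 0)"
  define X2 :: "complex mat" where "X2 = mat n (a*s*c*d) (\<lambda>(j,k).
     if j div (t*r*d) = k div (c*d) \<and> j mod d = k mod d \<and> j div (d*t) mod r = k div d mod c
     then 1 else 0)"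
  have c1: "X1 \<in> carrier_mat (a*b*(d*t)) n" unfolding X1_def by simp
  have c2: "X2 \<in> carrier_mat n (a*s*c*d)" unfolding X2_def by simp
  have f1: "is_factor (a,b,s*r,d*t) X1"
    unfolding is_factor_iff n_def[symmetric] using c1 by (auto simp: X1_def)
  have f2: "is_factor (a*s,t*r,c,d) X2"
    unfolding is_factor_iff n using c2 by (auto simp: X2_def)
  have "Y = X1 * X2"
  proof (rule eq_matI)
    show "dim_row Y = dim_row (X1*X2)" "dim_col Y = dim_col (X1*X2)" using cY c1 c2 by auto
    fix i k assume "i < dim_row (X1*X2)" "k < dim_col (X1*X2)"
    then have i: "i < a*b*(d*t)" and k: "k < a*s*c*d" using c1 c2 by auto
    define j0 where "j0 = (k div (c*d) * r + k div d mod c) * (d*t) + i mod (d*t)"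
    have rk: "k = (k div (c*d) * c + k div d mod c) * d + k mod d" by (rule recon)
    have "(X1*X2) $$ (i,k) = (\<Sum>j<n. X1 $$ (i,j) * X2 $$ (j,k))"
      using mult_entry[OF c1 c2 i k] .
    also have "\<dots> = Y $$ (i,k)"
    proof (rule sum_single[where jz=j0])
      fix j assume j: "j < n" and nz: "X1 $$ (i,j) * X2 $$ (j,k) \<noteq> 0"
      then have C: "i div (b*(d*t)) = j div (s*r*(d*t))" "i mod (d*t) = j mod (d*t)"
          "j div (d*t) mod r < c" "j div (t*r*d) = k div (c*d)"
          "j mod d = k mod d" "j div (d*t) mod r = k div d mod c"
        and v: "X1 $$ (i,j) * X2 $$ (j,k) = Y $$ (i, (j div (t*r*d) * c + j div (d*t) mod r) * d + j mod d)"
        using i k by (auto simp: X1_def X2_def split: if_splits)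
      have "(j div (t*r*d) * c + j div (d*t) mod r) * d + j mod d = k"
        unfolding C(4) C(5) C(6) by (rule rk[symmetric])
      moreover have "j = j0"
      proof -
        have "j = (j div (d*t) div r * r + j div (d*t) mod r) * (d*t) + j mod (d*t)" by (metis div_mult_mod_eq)
        also have "j div (d*t) div r = k div (c*d)" using C(4) div3' by metis
        finally show ?thesis unfolding j0_def C(2) C(6)[symmetric] .
      qed
      ultimately show "j = j0 \<and> X1 $$ (i,j) * X2 $$ (j,k) = Y $$ (i,k)" using v by simp
    next
      assume nz: "Y $$ (i,k) \<noteq> 0"
      then have S: "i div (b*t*d) = k div (s*c*d)" "i mod d = k mod d" using sY i k by auto
      have K: "k div (c*d) < a*s" using k by (simp add: less_mult_imp_div_less ac_simps)
      have c0: "c > 0" using k by (cases "c=0") auto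
      have cc: "k div d mod c < c" using c0 by simp
      have bl: "k div d mod c < r" using cc cr by linarith
      have ml: "i mod (d*t) < d*t" using pos by simp
      have e1: "j0 div (d*t) = k div (c*d) * r + k div d mod c" unfolding j0_def by (rule mr_div[OF ml])
      have e2: "j0 mod (d*t) = i mod (d*t)" unfolding j0_def by (rule mr_mod[OF ml])
      have e3: "j0 div (d*t) mod r = k div d mod c" using e1 bl by simp
      have e4: "j0 div (d*t) div r = k div (c*d)" using e1 bl by simp
      have j0n: "j0 < n"
      proof -
        have "k div (c*d) * r + k div d mod c < a*s*r" using mr_bound[OF K bl] by simp
        then have "(k div (c*d) * r + k div d mod c) * (d*t) + i mod (d*t) < (a*s*r)*(d*t)"
          using mr_bound[OF _ ml] by blast
        then show ?thesis unfolding j0_def n_def by (simp add: ac_simps)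
      qed
      have C1: "i div (b*(d*t)) = j0 div (s*r*(d*t))"
      proof -
        have "j0 div (s*r*(d*t)) = k div (c*d) div s" using div3[of j0 s r "d*t"] e4 by simp
        also have "\<dots> = k div (s*c*d)" by (simp add: div_mult2_eq ac_simps)
        also have "\<dots> = i div (b*(d*t))" using S(1) by (simp add: ac_simps)
        finally show ?thesis by simp
      qed
      have C4: "j0 div (t*r*d) = k div (c*d)" using div3' e4 by metis
      have C5: "j0 mod d = k mod d" using e2 S(2) by (metis mod_mod_cancel dvd_triv_left)
      have gk: "(j0 div (t*r*d) * c + j0 div (d*t) mod r) * d + j0 mod d = k"
        unfolding C4 e3 C5 by (rule rk[symmetric])
      have X1v: "X1 $$ (i,j0) = Y $$ (i,k)" unfolding X1_def using i j0n C1 e2 e3 cc gk by simp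
      have X2v: "X2 $$ (j0,k) = 1" unfolding X2_def using j0n k C4 C5 e3 by simp
      show "j0 < n \<and> X1 $$ (i,j0) * X2 $$ (j0,k) = Y $$ (i,k)" using j0n X1v X2v by simp
    qed
    finally show "Y $$ (i,k) = (X1*X2) $$ (i,k)" by simp
  qed
  then show ?thesis using f1 f2 by (intro exI[of _ X1] exI[of _ X2]) simp
qed



lemma chain_params:
  assumes v1: "valid_pattern (a1,b1,c1,d1)" and v2: "valid_pattern (a2,b2,c2,d2)"
    and ch: "chainable_pair (a1,b1,c1,d1) (a2,b2,c2,d2)"
  obtains s t r where "a2 = a1*s" "d1 = d2*t" "c1 = s*r" "b2 = t*r" "0<s" "0<t" "0<r"
    "r_pair (a1,b1,c1,d1) (a2,b2,c2,d2) = r"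
    "(a1,b1,c1,d1) \<star> (a2,b2,c2,d2) = (a1, b1*t, s*c2, d2)"
proof -
  have pos: "a1>0" "b1>0" "c1>0" "d1>0" "a2>0" "b2>0" "c2>0" "d2>0"
    using v1 v2 unfolding valid_pattern_def by auto
  have h: "a2 dvd a1*c1" "d1 dvd b2*d2" "a1*c1 div a2 = b2*d2 div d1" "a1 dvd a2" "d2 dvd d1"
    using ch unfolding chainable_pair_def by auto
  obtain s where s: "a2 = a1*s" using h(4) by blast
  obtain t where t: "d1 = d2*t" using h(5) by blast
  define r where "r = a1*c1 div a2"
  have r1: "a1*c1 = a2*r" unfolding r_def using h(1) by simp
  have r2: "b2*d2 = d1*r" unfolding r_def h(3) using h(2) by simp
  have c1: "c1 = s*r" using r1 s pos by (simp add: ac_simps)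
  have b2: "b2 = t*r" using r2 t pos by (simp add: ac_simps)
  have sp: "s>0" "t>0" "r>0" using s t c1 pos by auto
  have st: "(a1,b1,c1,d1) \<star> (a2,b2,c2,d2) = (a1, b1*t, s*c2, d2)"
    unfolding star_def using s t pos by (simp add: ac_simps)
  have rp: "r_pair (a1,b1,c1,d1) (a2,b2,c2,d2) = r" unfolding r_pair_def r_def by simp
  show ?thesis using that[OF s t c1 b2 sp rp st] .
qed

lemma pair_prod:
  assumes "valid_pattern p" "valid_pattern q" "chainable_pair p q"
    "is_factor p X1" "is_factor q X2"
  shows "is_factor (p \<star> q) (X1*X2)"
proof -
  obtain a1 b1 c1 d1 where p: "p = (a1,b1,c1,d1)" by (cases p) auto
  obtain a2 b2 c2 d2 where q: "q = (a2,b2,c2,d2)" by (cases q) auto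
  obtain s t r where P: "a2 = a1*s" "d1 = d2*t" "c1 = s*r" "b2 = t*r"
    "(a1,b1,c1,d1) \<star> (a2,b2,c2,d2) = (a1, b1*t, s*c2, d2)"
    using chain_params assms(1-3) unfolding p q by metis
  show ?thesis using prod_factor[of a1 b1 s r d2 t X1 c2 X2] assms(4,5) unfolding p q P(5)
    by (simp add: P(1-4))
qed

lemma pair_decomp:
  assumes "valid_pattern p" "valid_pattern q" "redundant_pair p q" "is_factor (p \<star> q) Y"
  shows "\<exists>X1 X2. is_factor p X1 \<and> is_factor q X2 \<and> Y = X1*X2"
proof -
  obtain a1 b1 c1 d1 where p: "p = (a1,b1,c1,d1)" by (cases p) auto
  obtain a2 b2 c2 d2 where q: "q = (a2,b2,c2,d2)" by (cases q) auto
  have ch: "chainable_pair p q" and rr: "r_pair p q \<ge> min b1 c2"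
    using assms(3) unfolding redundant_pair_def p q by auto
  obtain s t r where P: "a2 = a1*s" "d1 = d2*t" "c1 = s*r" "b2 = t*r" "0<s" "0<t" "0<r"
    "r_pair (a1,b1,c1,d1) (a2,b2,c2,d2) = r"
    "(a1,b1,c1,d1) \<star> (a2,b2,c2,d2) = (a1, b1*t, s*c2, d2)"
    using chain_params assms(1-2) ch unfolding p q by metis
  have d2: "0 < d2" using assms(2) unfolding q valid_pattern_def by auto
  have Y: "is_factor (a1, b1*t, s*c2, d2) Y" using assms(4) unfolding p q P(9) .
  have "b1 \<le> r \<or> c2 \<le> r" using rr P(8) unfolding p q by auto
  then show ?thesis
  proof
    assume "b1 \<le> r" then show ?thesis using decomp_b[OF Y _ d2 P(6)] unfolding p q P(1-4) by blast
  next
    assume "c2 \<le> r" then show ?thesis using decomp_c[OF Y _ d2 P(6)] unfolding p q P(1-4) by blast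
  qed
qed

definition pnorm :: "pattern \<Rightarrow> nat" where "pnorm \<pi> = (case \<pi> of (a,b,c,d) \<Rightarrow> a*b*c*d)"

lemma pair_norm:
  assumes "valid_pattern p" "valid_pattern q" "redundant_pair p q"
  shows "pnorm (p \<star> q) \<le> pnorm p + pnorm q"
proof -
  obtain a1 b1 c1 d1 where p: "p = (a1,b1,c1,d1)" by (cases p) auto
  obtain a2 b2 c2 d2 where q: "q = (a2,b2,c2,d2)" by (cases q) auto
  have ch: "chainable_pair p q" and rr: "r_pair p q \<ge> min b1 c2"
    using assms(3) unfolding redundant_pair_def p q by auto
  obtain s t r where P: "a2 = a1*s" "d1 = d2*t" "c1 = s*r" "b2 = t*r" "0<s" "0<t" "0<r"
    "r_pair (a1,b1,c1,d1) (a2,b2,c2,d2) = r"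
    "(a1,b1,c1,d1) \<star> (a2,b2,c2,d2) = (a1, b1*t, s*c2, d2)"
    using chain_params assms(1-2) ch unfolding p q by metis
  have key: "b1*c2 \<le> b1*r + r*c2" using rr P(8) unfolding p q
    by (cases "b1 \<le> r") (auto intro: trans_le_add1 trans_le_add2 mult_le_mono)
  have "pnorm (p \<star> q) = (a1*s*t*d2) * (b1*c2)" unfolding p q P(9) pnorm_def by (simp add: ac_simps)
  also have "\<dots> \<le> (a1*s*t*d2) * (b1*r + r*c2)" using key by (rule mult_le_mono2)
  also have "\<dots> = pnorm p + pnorm q" unfolding p q pnorm_def P(1-4) by (simp add: algebra_simps)
  finally show ?thesis .
qed



lemma foldl_dims: "dim_row (foldl (*) A Ws) = dim_row A"
  "dim_col (foldl (*) A Ws) = (if Ws = [] then dim_col A else dim_col (last Ws))"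
  by (induction Ws arbitrary: A) auto

lemma mpl_append: "Us \<noteq> [] \<Longrightarrow> mat_prod_list (Us @ Ws) = foldl (*) (mat_prod_list Us) Ws"
  by (cases Us) (auto simp: mat_prod_list_def)

lemma mpl_dim_col: "Us \<noteq> [] \<Longrightarrow> dim_col (mat_prod_list Us) = dim_col (last Us)"
  by (cases Us) (auto simp: mat_prod_list_def foldl_dims)

lemma mpl_merge:
  assumes "Us = [] \<or> dim_col (mat_prod_list Us) = dim_row X1" "dim_col X1 = dim_row X2"
  shows "mat_prod_list (Us @ [X1,X2] @ Vs) = mat_prod_list (Us @ [X1*X2] @ Vs)"
proof (cases "Us = []")
  case True then show ?thesis by (simp add: mat_prod_list_def)
next
  case False
  let ?P = "mat_prod_list Us"
  have "?P * X1 * X2 = ?P * (X1 * X2)"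
    using assms False by (intro assoc_mult_mat[of _ "dim_row ?P" "dim_col ?P" _ "dim_col X1" _ "dim_col X2"]) auto
  then show ?thesis using False by (simp add: mpl_append)
qed

lemma B_set_alt: "B_set \<beta> = {mat_prod_list Xs | Xs. list_all2 is_factor \<beta> Xs}"
  unfolding B_set_def list_all2_conv_all_nth by auto

lemma list_all2_last: "list_all2 P xs ys \<Longrightarrow> xs \<noteq> [] \<Longrightarrow> P (last xs) (last ys)"
  by (induction rule: list_all2_induct) (auto simp: list_all2_Nil list_all2_Cons1 elim: list_all2_lengthD[THEN sym, elim_format])

definition rowsP :: "pattern \<Rightarrow> nat" where "rowsP \<pi> = (case \<pi> of (a,b,c,d) \<Rightarrow> a*b*d)"
definition colsP :: "pattern \<Rightarrow> nat" where "colsP \<pi> = (case \<pi> of (a,b,c,d) \<Rightarrow> a*c*d)"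

lemma factor_dims: "is_factor \<pi> X \<Longrightarrow> dim_row X = rowsP \<pi> \<and> dim_col X = colsP \<pi>"
  unfolding is_factor_def rowsP_def colsP_def by (cases \<pi>) auto

lemma arch_dim: "is_architecture \<beta> \<Longrightarrow> Suc l < length \<beta> \<Longrightarrow> colsP (\<beta>!l) = rowsP (\<beta>!Suc l)"
  unfolding is_architecture_def rowsP_def colsP_def by auto

lemma B_merge:
  assumes arch: "is_architecture (xs @ [p,q] @ ys)" and vp: "valid_pattern p" and vq: "valid_pattern q"
    and red: "redundant_pair p q"
  shows "B_set (xs @ [p \<star> q] @ ys) = B_set (xs @ [p,q] @ ys)"
proof -
  have ch: "chainable_pair p q" using red unfolding redundant_pair_def by (cases p; cases q) auto
  have dpq: "colsP p = rowsP q" using arch_dim[OF arch, of "length xs"] by (simp add: nth_append)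
  have dxp: "colsP (last xs) = rowsP p" if "xs \<noteq> []"
  proof -
    have "colsP ((xs @ [p,q] @ ys) ! (length xs - 1)) = rowsP ((xs @ [p,q] @ ys) ! Suc (length xs - 1))"
      using arch_dim[OF arch, of "length xs - 1"] that by simp
    then show ?thesis using that by (simp add: nth_append last_conv_nth)
  qed
  show ?thesis unfolding B_set_alt
  proof (intro equalityI subsetI)
    fix M assume "M \<in> {mat_prod_list Xs |Xs. list_all2 is_factor (xs @ [p \<star> q] @ ys) Xs}"
    then obtain Us Y Vs where M: "M = mat_prod_list (Us @ [Y] @ Vs)" and U: "list_all2 is_factor xs Us"
      and Yf: "is_factor (p \<star> q) Y" and V: "list_all2 is_factor ys Vs"
      by (auto simp: list_all2_append1 list_all2_Cons1)
    obtain X1 X2 where X: "is_factor p X1" "is_factor q X2" "Y = X1*X2"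
      using pair_decomp[OF vp vq red Yf] by blast
    have d1: "Us = [] \<or> dim_col (mat_prod_list Us) = dim_row X1"
    proof (cases "Us = []")
      case False
      then have "xs \<noteq> []" using U by auto
      then show ?thesis using False mpl_dim_col list_all2_last[OF U] factor_dims X(1) dxp by metis
    qed simp
    have d2: "dim_col X1 = dim_row X2" using factor_dims X dpq by metis
    have "M = mat_prod_list (Us @ [X1,X2] @ Vs)" using mpl_merge[OF d1 d2] M X(3) by simp
    moreover have "list_all2 is_factor (xs @ [p,q] @ ys) (Us @ [X1,X2] @ Vs)"
      using U V X by (simp add: list_all2_appendI)
    ultimately show "M \<in> {mat_prod_list Xs |Xs. list_all2 is_factor (xs @ [p,q] @ ys) Xs}" by blast
  next
    fix M assume "M \<in> {mat_prod_list Xs |Xs. list_all2 is_factor (xs @ [p,q] @ ys) Xs}"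
    then obtain Us X1 X2 Vs where M: "M = mat_prod_list (Us @ [X1,X2] @ Vs)" and U: "list_all2 is_factor xs Us"
      and X: "is_factor p X1" "is_factor q X2" and V: "list_all2 is_factor ys Vs"
      by (auto simp: list_all2_append1 list_all2_Cons1)
    have d1: "Us = [] \<or> dim_col (mat_prod_list Us) = dim_row X1"
    proof (cases "Us = []")
      case False
      then have "xs \<noteq> []" using U by auto
      then show ?thesis using False mpl_dim_col list_all2_last[OF U] factor_dims X(1) dxp by metis
    qed simp
    have d2: "dim_col X1 = dim_row X2" using factor_dims X dpq by metis
    have "M = mat_prod_list (Us @ [X1*X2] @ Vs)" using mpl_merge[OF d1 d2] M by simp
    moreover have "list_all2 is_factor (xs @ [p \<star> q] @ ys) (Us @ [X1*X2] @ Vs)"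
      using U V X pair_prod[OF vp vq ch X] by (simp add: list_all2_appendI)
    ultimately show "M \<in> {mat_prod_list Xs |Xs. list_all2 is_factor (xs @ [p \<star> q] @ ys) Xs}" by blast
  qed
qed



definition pa :: "pattern \<Rightarrow> nat" where "pa \<pi> = fst \<pi>"
definition pb :: "pattern \<Rightarrow> nat" where "pb \<pi> = fst (snd \<pi>)"
definition pc :: "pattern \<Rightarrow> nat" where "pc \<pi> = fst (snd (snd \<pi>))"
definition pd :: "pattern \<Rightarrow> nat" where "pd \<pi> = snd (snd (snd \<pi>))"

lemma pat_eta: "\<pi> = (pa \<pi>, pb \<pi>, pc \<pi>, pd \<pi>)"
  unfolding pa_def pb_def pc_def pd_def by simp

lemma chain_acc: "chainable_pair x y \<longleftrightarrow> pa y dvd pa x * pc x \<and> pd x dvd pb y * pd y \<and>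
   pa x * pc x div pa y = pb y * pd y div pd x \<and> pa x dvd pa y \<and> pd y dvd pd x"
  unfolding chainable_pair_def pa_def pb_def pc_def pd_def by (cases x; cases y) auto

lemma star_acc: "x \<star> y = (pa x, pb x * pd x div pd y, pa y * pc y div pa x, pd y)"
  unfolding star_def pa_def pb_def pc_def pd_def by (cases x; cases y) auto

lemma valid_acc: "valid_pattern x \<longleftrightarrow> pa x > 0 \<and> pb x > 0 \<and> pc x > 0 \<and> pd x > 0"
  unfolding valid_pattern_def pa_def pb_def pc_def pd_def by (cases x) auto

lemma arch_acc: assumes "is_architecture \<beta>" "Suc l < length \<beta>" shows
   "pa (\<beta>!l) * pc (\<beta>!l) * pd (\<beta>!l) = pa (\<beta>!Suc l) * pb (\<beta>!Suc l) * pd (\<beta>!Suc l)"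
proof -
  have "colsP x = pa x * pc x * pd x" "rowsP x = pa x * pb x * pd x" for x
    unfolding colsP_def rowsP_def pa_def pb_def pc_def pd_def by (cases x; simp)+
  then show ?thesis using arch_dim[OF assms] by metis
qed

lemma arch_valid: "is_architecture \<beta> \<Longrightarrow> l < length \<beta> \<Longrightarrow> valid_pattern (\<beta>!l)"
  unfolding is_architecture_def by auto

lemma chain_dvd:
  assumes ch: "chainable_arch \<beta>" and pq: "p \<le> q" "q < length \<beta>"
  shows "pa (\<beta>!p) dvd pa (\<beta>!q) \<and> pd (\<beta>!q) dvd pd (\<beta>!p)"
  using pq
proof (induction q rule: dec_induct)
  case base then show ?case by simp
next
  case (step n)
  have "chainable_pair (\<beta>!n) (\<beta>!Suc n)" using ch step unfolding chainable_arch_def by auto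
  then have "pa (\<beta>!n) dvd pa (\<beta>!Suc n)" "pd (\<beta>!Suc n) dvd pd (\<beta>!n)" unfolding chain_acc by auto
  then show ?case using step by (meson dvd_trans Suc_lessD)
qed

definition CF :: "architecture \<Rightarrow> nat \<Rightarrow> nat \<Rightarrow> pattern" where
  "CF \<beta> p q = (pa (\<beta>!p), pb (\<beta>!p) * pd (\<beta>!p) div pd (\<beta>!(q-1)),
                pa (\<beta>!(q-1)) * pc (\<beta>!(q-1)) div pa (\<beta>!p), pd (\<beta>!(q-1)))"

lemma CF_acc: "pa (CF \<beta> p q) = pa (\<beta>!p)" "pb (CF \<beta> p q) = pb (\<beta>!p) * pd (\<beta>!p) div pd (\<beta>!(q-1))"
  "pc (CF \<beta> p q) = pa (\<beta>!(q-1)) * pc (\<beta>!(q-1)) div pa (\<beta>!p)" "pd (CF \<beta> p q) = pd (\<beta>!(q-1))"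
  unfolding CF_def pa_def pb_def pc_def pd_def by simp_all

context
  fixes \<beta> :: architecture
  assumes arch: "is_architecture \<beta>" and ch: "chainable_arch \<beta>"
begin

lemma dv1: "p < q \<Longrightarrow> q \<le> length \<beta> \<Longrightarrow> pd (\<beta>!(q-1)) dvd pd (\<beta>!p)"
  using chain_dvd[OF ch, of p "q-1"] by simp
lemma dv2: "p < q \<Longrightarrow> q \<le> length \<beta> \<Longrightarrow> pa (\<beta>!p) dvd pa (\<beta>!(q-1))"
  using chain_dvd[OF ch, of p "q-1"] by simp

lemma iter_closed: "p < q \<Longrightarrow> q \<le> length \<beta> \<Longrightarrow> iter_star \<beta> p q = CF \<beta> p q"
proof (induction q rule: nat_induct)
  case 0 then show ?case by simp
next
  case (Suc q)
  show ?case
  proof (cases "q = p")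
    case True
    have v: "valid_pattern (\<beta>!p)" using arch_valid[OF arch] Suc True by simp
    show ?thesis unfolding True iter_star_def CF_def using v
      by (subst (1) pat_eta) (simp add: valid_acc)
  next
    case False
    then have pq: "p < q" using Suc by simp
    have IH: "iter_star \<beta> p q = CF \<beta> p q" using Suc pq by simp
    have "iter_star \<beta> p (Suc q) = iter_star \<beta> p q \<star> \<beta>!q"
      unfolding iter_star_def using pq by simp
    also have "\<dots> = CF \<beta> p q \<star> \<beta>!q" using IH by simp
    also have "\<dots> = CF \<beta> p (Suc q)"
    proof -
      have d: "pd (\<beta>!(q-1)) dvd pd (\<beta>!p)" using dv1[OF pq] Suc by simp
      have "pb (\<beta>!p) * pd (\<beta>!p) div pd (\<beta>!(q-1)) * pd (\<beta>!(q-1)) = pb (\<beta>!p) * pd (\<beta>!p)"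
        using d by (simp add: dvd_div_mult_self)
      then show ?thesis unfolding star_acc CF_acc by (simp add: CF_def)
    qed
    finally show ?thesis .
  qed
qed

lemma CF_merge:
  assumes "p < q" "q < r" "r \<le> length \<beta>"
  shows "CF \<beta> p q \<star> CF \<beta> q r = CF \<beta> p r"
proof -
  have d1: "pd (\<beta>!(q-1)) dvd pd (\<beta>!p)" using dv1 assms by simp
  have d2: "pa (\<beta>!q) dvd pa (\<beta>!(r-1))" using dv2 assms by simp
  have e1: "pb (\<beta>!p) * pd (\<beta>!p) div pd (\<beta>!(q-1)) * pd (\<beta>!(q-1)) = pb (\<beta>!p) * pd (\<beta>!p)"
    using d1 by (simp add: dvd_div_mult_self)
  have e2: "pa (\<beta>!q) * (pa (\<beta>!(r-1)) * pc (\<beta>!(r-1)) div pa (\<beta>!q)) = pa (\<beta>!(r-1)) * pc (\<beta>!(r-1))"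
    using d2 by (simp add: dvd_mult_div_cancel)
  show ?thesis unfolding star_acc CF_acc e1 e2 by (simp add: CF_def)
qed

lemma CF_valid:
  assumes "p < q" "q \<le> length \<beta>"
  shows "valid_pattern (CF \<beta> p q)"
proof -
  have vp: "valid_pattern (\<beta>!p)" "valid_pattern (\<beta>!(q-1))" using arch_valid[OF arch] assms by auto
  have d1: "pd (\<beta>!(q-1)) dvd pd (\<beta>!p)" using dv1 assms by simp
  have d2: "pa (\<beta>!p) dvd pa (\<beta>!(q-1))" using dv2 assms by simp
  have l1: "pd (\<beta>!(q-1)) \<le> pd (\<beta>!p)" using d1 vp by (simp add: dvd_imp_le valid_acc)
  have l2: "pd (\<beta>!p) \<le> pb (\<beta>!p) * pd (\<beta>!p)" using vp by (simp add: valid_acc)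
  have g1: "pb (\<beta>!p) * pd (\<beta>!p) div pd (\<beta>!(q-1)) > 0"
    using vp le_trans[OF l1 l2] by (simp add: div_greater_zero_iff valid_acc)
  have l3: "pa (\<beta>!p) \<le> pa (\<beta>!(q-1))" using d2 vp by (simp add: dvd_imp_le valid_acc)
  have l4: "pa (\<beta>!(q-1)) \<le> pa (\<beta>!(q-1)) * pc (\<beta>!(q-1))" using vp by (simp add: valid_acc)
  have g2: "pa (\<beta>!(q-1)) * pc (\<beta>!(q-1)) div pa (\<beta>!p) > 0"
    using vp le_trans[OF l3 l4] by (simp add: div_greater_zero_iff valid_acc)
  from g1 g2 show ?thesis using vp unfolding valid_acc CF_acc by simp
qed

lemma CF_chain:
  assumes "p < q" "q < r" "r \<le> length \<beta>"
  shows "chainable_pair (CF \<beta> p q) (CF \<beta> q r)"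
proof -
  have q1: "Suc (q-1) = q" "Suc (q-1) < length \<beta>" using assms by auto
  have cq: "chainable_pair (\<beta>!(q-1)) (\<beta>!q)" using ch q1 unfolding chainable_arch_def
    by metis
  have d1: "pd (\<beta>!(r-1)) dvd pd (\<beta>!(q-1))" using chain_dvd[OF ch, of "q-1" "r-1"] assms by simp
  have d2: "pa (\<beta>!p) dvd pa (\<beta>!q)" using chain_dvd[OF ch, of p q] assms by simp
  have d3: "pd (\<beta>!(r-1)) dvd pd (\<beta>!q)" using chain_dvd[OF ch, of q "r-1"] assms by simp
  have d4: "pa (\<beta>!p) dvd pa (\<beta>!(q-1))" using dv2 assms by simp
  have e1: "pa (\<beta>!p) * (pa (\<beta>!(q-1)) * pc (\<beta>!(q-1)) div pa (\<beta>!p)) = pa (\<beta>!(q-1)) * pc (\<beta>!(q-1))"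
    using d4 by (simp add: dvd_mult_div_cancel)
  have e2: "pb (\<beta>!q) * pd (\<beta>!q) div pd (\<beta>!(r-1)) * pd (\<beta>!(r-1)) = pb (\<beta>!q) * pd (\<beta>!q)"
    using d3 by (simp add: dvd_div_mult_self)
  show ?thesis using cq d1 d2 unfolding chain_acc CF_acc e1 e2 by simp
qed

lemma CF_dim:
  assumes "p < q" "q < r" "r \<le> length \<beta>"
  shows "pa (CF \<beta> p q) * pc (CF \<beta> p q) * pd (CF \<beta> p q) = pa (CF \<beta> q r) * pb (CF \<beta> q r) * pd (CF \<beta> q r)"
proof -
  have d3: "pd (\<beta>!(r-1)) dvd pd (\<beta>!q)" using chain_dvd[OF ch, of q "r-1"] assms by simp
  have d4: "pa (\<beta>!p) dvd pa (\<beta>!(q-1))" using dv2 assms by simp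
  have e1: "pa (\<beta>!p) * (pa (\<beta>!(q-1)) * pc (\<beta>!(q-1)) div pa (\<beta>!p)) = pa (\<beta>!(q-1)) * pc (\<beta>!(q-1))"
    using d4 by (simp add: dvd_mult_div_cancel)
  have e2: "pb (\<beta>!q) * pd (\<beta>!q) div pd (\<beta>!(r-1)) * pd (\<beta>!(r-1)) = pb (\<beta>!q) * pd (\<beta>!q)"
    using d3 by (simp add: dvd_div_mult_self)
  have a: "pa (\<beta>!(q-1)) * pc (\<beta>!(q-1)) * pd (\<beta>!(q-1)) = pa (\<beta>!q) * pb (\<beta>!q) * pd (\<beta>!q)"
    using arch_acc[OF arch, of "q-1"] assms by simp
  show ?thesis unfolding CF_acc using e1 e2 a by (metis mult.assoc)
qed

end



lemma case_acc: "(case x of (a,b,c,d) \<Rightarrow> a*c*d) = pa x * pc x * pd x"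
  "(case x of (a,b,c,d) \<Rightarrow> a*b*d) = pa x * pb x * pd x"
  unfolding pa_def pb_def pc_def pd_def by (cases x; simp)+

lemma arch_iff: "is_architecture \<beta> \<longleftrightarrow> \<beta> \<noteq> [] \<and> (\<forall>\<pi>\<in>set \<beta>. valid_pattern \<pi>) \<and>
  (\<forall>l. Suc l < length \<beta> \<longrightarrow> pa (\<beta>!l) * pc (\<beta>!l) * pd (\<beta>!l) = pa (\<beta>!Suc l) * pb (\<beta>!Suc l) * pd (\<beta>!Suc l))"
  unfolding is_architecture_def case_acc by simp

lemma c_mono: "sorted_wrt (<) c \<Longrightarrow> i < j \<Longrightarrow> j < length c \<Longrightarrow> (c!i::nat) < c!j"
  by (simp add: sorted_wrt_iff_nth_less)

lemma c_bound: assumes "sorted_wrt (<) c" "last c = L" "i < length c" shows "(c!i::nat) \<le> L"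
proof -
  have "c \<noteq> []" using assms(3) by auto
  then have lcn: "last c = c!(length c - 1)" by (simp add: last_conv_nth)
  have "i = length c - 1 \<or> i < length c - 1" using assms(3) by linarith
  then show ?thesis
  proof
    assume "i = length c - 1" then show ?thesis using assms lcn by simp
  next
    assume "i < length c - 1"
    then have "c!i < c!(length c - 1)" using c_mono[OF assms(1)] assms(3) by simp
    then show ?thesis using assms lcn by simp
  qed
qed

definition good :: "architecture \<Rightarrow> nat list \<Rightarrow> architecture \<Rightarrow> bool" where
  "good \<beta> c \<beta>' \<longleftrightarrow> sorted_wrt (<) c \<and> length c \<ge> 2 \<and> c!0 = 0 \<and> last c = length \<beta> \<and>
     \<beta>' = map (\<lambda>k. CF \<beta> (c!k) (c!Suc k)) [0..<length c - 1]"

lemma split2: "Suc l < length xs \<Longrightarrow> xs = take l xs @ [xs!l, xs!Suc l] @ drop (Suc (Suc l)) xs"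
  by (simp add: Cons_nth_drop_Suc)

lemma step_nth: "Suc l < length xs \<Longrightarrow> k < length xs - 1 \<Longrightarrow>
  (take l xs @ [y] @ drop (Suc (Suc l)) xs)!k = (if k < l then xs!k else if k = l then y else xs!Suc k)"
  by (auto simp: nth_append min_def)

lemma rr_len: "rr_step x y \<Longrightarrow> length y = length x - 1 \<and> 2 \<le> length x"
  unfolding rr_step_def by auto

lemma norm0_pnorm: "norm0 xs = sum_list (map pnorm xs)"
  unfolding norm0_def pnorm_def by (induction xs) auto

lemma rr_B_norm:
  assumes arch: "is_architecture \<beta>'" and st: "rr_step \<beta>' \<beta>''"
  shows "B_set \<beta>'' = B_set \<beta>' \<and> norm0 \<beta>'' \<le> norm0 \<beta>'"
proof -
  obtain l where l: "Suc l < length \<beta>'" and red: "redundant_pair (\<beta>'!l) (\<beta>'!Suc l)"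
    and b2: "\<beta>'' = take l \<beta>' @ [\<beta>'!l \<star> \<beta>'!Suc l] @ drop (Suc (Suc l)) \<beta>'"
    using st unfolding rr_step_def by auto
  have sp: "\<beta>' = take l \<beta>' @ [\<beta>'!l, \<beta>'!Suc l] @ drop (Suc (Suc l)) \<beta>'" using split2[OF l] .
  have vp: "valid_pattern (\<beta>'!l)" "valid_pattern (\<beta>'!Suc l)" using arch_valid[OF arch] l by auto
  have a2: "is_architecture (take l \<beta>' @ [\<beta>'!l, \<beta>'!Suc l] @ drop (Suc (Suc l)) \<beta>')"
    using arch sp by simp
  have B: "B_set \<beta>'' = B_set \<beta>'" unfolding b2 using B_merge[OF a2 vp red] sp by simp
  have "norm0 \<beta>'' = norm0 (take l \<beta>') + pnorm (\<beta>'!l \<star> \<beta>'!Suc l) + norm0 (drop (Suc (Suc l)) \<beta>')"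
    unfolding b2 norm0_pnorm by simp
  also have "\<dots> \<le> norm0 (take l \<beta>') + (pnorm (\<beta>'!l) + pnorm (\<beta>'!Suc l)) + norm0 (drop (Suc (Suc l)) \<beta>')"
    using pair_norm[OF vp red] by simp
  also have "\<dots> = norm0 \<beta>'" by (subst (2) sp) (simp add: norm0_pnorm)
  finally show ?thesis using B by simp
qed

context
  fixes \<beta> :: architecture
  assumes arch: "is_architecture \<beta>" and ch: "chainable_arch \<beta>"
begin

lemma good_arch:
  assumes g: "good \<beta> c \<beta>'"
  shows "is_architecture \<beta>' \<and> chainable_arch \<beta>'"
proof -
  have s: "sorted_wrt (<) c" and lc: "length c \<ge> 2" and la: "last c = length \<beta>"
    and b: "\<beta>' = map (\<lambda>k. CF \<beta> (c!k) (c!Suc k)) [0..<length c - 1]"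
    using g unfolding good_def by auto
  have len: "length \<beta>' = length c - 1" using b by simp
  have nth: "\<beta>'!k = CF \<beta> (c!k) (c!Suc k)" if "k < length c - 1" for k using b that by simp
  have lt: "c!k < c!Suc k" if "Suc k < length c" for k using c_mono[OF s] that by simp
  have bd: "c!k \<le> length \<beta>" if "k < length c" for k using c_bound[OF s la that] .
  have ne: "\<beta>' \<noteq> []" using len lc by auto
  have va: "\<forall>\<pi>\<in>set \<beta>'. valid_pattern \<pi>"
  proof
    fix \<pi> assume "\<pi> \<in> set \<beta>'"
    then obtain k where k: "k < length c - 1" "\<pi> = CF \<beta> (c!k) (c!Suc k)" using b by auto
    then show "valid_pattern \<pi>" using CF_valid[OF arch ch lt bd] by simp
  qed
  have dm: "\<forall>l. Suc l < length \<beta>' \<longrightarrow> pa (\<beta>'!l) * pc (\<beta>'!l) * pd (\<beta>'!l) = pa (\<beta>'!Suc l) * pb (\<beta>'!Suc l) * pd (\<beta>'!Suc l)"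
  proof (intro allI impI)
    fix l assume "Suc l < length \<beta>'"
    then have l: "Suc (Suc l) < length c" using len by simp
    show "pa (\<beta>'!l) * pc (\<beta>'!l) * pd (\<beta>'!l) = pa (\<beta>'!Suc l) * pb (\<beta>'!Suc l) * pd (\<beta>'!Suc l)"
      using CF_dim[OF arch ch lt[of l] lt[of "Suc l"] bd[of "Suc (Suc l)"]] l nth[of l] nth[of "Suc l"] by simp
  qed
  have cha: "chainable_arch \<beta>'" unfolding chainable_arch_def
  proof (intro allI impI)
    fix l assume "Suc l < length \<beta>'"
    then have l: "Suc (Suc l) < length c" using len by simp
    show "chainable_pair (\<beta>'!l) (\<beta>'!Suc l)"
      using CF_chain[OF arch ch lt[of l] lt[of "Suc l"] bd[of "Suc (Suc l)"]] l nth[of l] nth[of "Suc l"] by simp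
  qed
  show ?thesis using ne va dm cha unfolding arch_iff by simp
qed

lemma good_step:
  assumes g: "good \<beta> c \<beta>'" and st: "rr_step \<beta>' \<beta>''"
  shows "\<exists>c'. good \<beta> c' \<beta>''"
proof -
  have s: "sorted_wrt (<) c" and lc: "length c \<ge> 2" and c0: "c!0 = 0" and la: "last c = length \<beta>"
    and b: "\<beta>' = map (\<lambda>k. CF \<beta> (c!k) (c!Suc k)) [0..<length c - 1]"
    using g unfolding good_def by auto
  define m where "m = length c"
  have len: "length \<beta>' = m - 1" using b m_def by simp
  have nth: "\<beta>'!k = CF \<beta> (c!k) (c!Suc k)" if "k < m - 1" for k using b that m_def by simp
  have lt: "c!k < c!Suc k" if "Suc k < m" for k using c_mono[OF s] that m_def by simp
  have bd: "c!k \<le> length \<beta>" if "k < m" for k using c_bound[OF s la] that m_def by simp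
  obtain l where l: "Suc l < length \<beta>'"
    and b2: "\<beta>'' = take l \<beta>' @ [\<beta>'!l \<star> \<beta>'!Suc l] @ drop (Suc (Suc l)) \<beta>'"
    using st unfolding rr_step_def by auto
  have lm: "Suc (Suc l) < m" using l len by simp
  define c' where "c' = map (\<lambda>i. if i \<le> l then c!i else c!Suc i) [0..<m - 1]"
  have lc': "length c' = m - 1" unfolding c'_def by simp
  have nc': "c'!i = (if i \<le> l then c!i else c!Suc i)" if "i < m - 1" for i
    unfolding c'_def using that by simp
  have s': "sorted_wrt (<) c'" unfolding sorted_wrt_iff_nth_less lc'
  proof (intro allI impI)
    fix i j assume ij: "i < j" "j < m - 1"
    have i: "i < m - 1" using ij by simp
    show "c'!i < c'!j" unfolding nc'[OF ij(2)] nc'[OF i] using ij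
      by (auto intro!: c_mono[OF s] simp: m_def)
  qed
  have c0': "c'!0 = 0" using nc'[of 0] c0 lm by simp
  have la': "last c' = length \<beta>"
  proof -
    have ne': "c' \<noteq> []" using lc' lm by auto
    have "last c' = c'!(length c' - 1)" using ne' by (simp add: last_conv_nth)
    also have "length c' - 1 = m - 2" using lc' by simp
    finally have "last c' = c'!(m - 2)" .
    also have "\<dots> = c!(m - 1)" using nc'[of "m-2"] lm by (simp add: Suc_diff_Suc numeral_2_eq_2)
    also have "\<dots> = last c" using lm by (subst last_conv_nth) (auto simp: m_def)
    finally show ?thesis using la by simp
  qed
  have lb2: "length \<beta>'' = m - 2" using b2 l len by simp
  have eq: "\<beta>'' = map (\<lambda>k. CF \<beta> (c'!k) (c'!Suc k)) [0..<length c' - 1]"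
  proof (rule nth_equalityI)
    show "length \<beta>'' = length (map (\<lambda>k. CF \<beta> (c'!k) (c'!Suc k)) [0..<length c' - 1])"
      using lb2 lc' by simp
    fix k assume "k < length \<beta>''"
    then have k: "k < m - 2" using lb2 by simp
    have r: "map (\<lambda>k. CF \<beta> (c'!k) (c'!Suc k)) [0..<length c' - 1] ! k = CF \<beta> (c'!k) (c'!Suc k)"
    proof -
      have k': "k < length c' - 1" using k lc' by simp
      then show ?thesis by simp
    qed
    have bk: "\<beta>''!k = (if k < l then \<beta>'!k else if k = l then \<beta>'!l \<star> \<beta>'!Suc l else \<beta>'!Suc k)"
      unfolding b2 using step_nth[OF l, of k] k len by simp
    show "\<beta>''!k = map (\<lambda>k. CF \<beta> (c'!k) (c'!Suc k)) [0..<length c' - 1] ! k"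
      unfolding r
    proof (cases "k < l")
      case True then show "\<beta>''!k = CF \<beta> (c'!k) (c'!Suc k)"
        using bk nth[of k] nc'[of k] nc'[of "Suc k"] k by simp
    next
      case False
      show "\<beta>''!k = CF \<beta> (c'!k) (c'!Suc k)"
      proof (cases "k = l")
        case True
        have "\<beta>''!k = CF \<beta> (c!l) (c!Suc l) \<star> CF \<beta> (c!Suc l) (c!Suc (Suc l))"
          using bk True nth[of l] nth[of "Suc l"] lm by simp
        also have "\<dots> = CF \<beta> (c!l) (c!Suc (Suc l))"
          using CF_merge[OF arch ch lt[of l] lt[of "Suc l"] bd[of "Suc (Suc l)"]] lm by simp
        finally show ?thesis using True nc'[of l] nc'[of "Suc l"] k by simp
      next
        case F2: False
        then show ?thesis using False bk nth[of "Suc k"] nc'[of k] nc'[of "Suc k"] k by simp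
      qed
    qed
  qed
  have "2 \<le> length c'" using lc' lm by simp
  then show ?thesis using s' c0' la' eq unfolding good_def by blast
qed

lemma good_init: "good \<beta> [0..<Suc (length \<beta>)] \<beta>"
proof -
  have ne: "\<beta> \<noteq> []" using arch unfolding is_architecture_def by simp
  have "CF \<beta> k (Suc k) = \<beta>!k" if "k < length \<beta>" for k
  proof -
    have "CF \<beta> k (Suc k) = iter_star \<beta> k (Suc k)" using iter_closed[OF arch ch, of k "Suc k"] that by simp
    also have "\<dots> = \<beta>!k" unfolding iter_star_def by simp
    finally show ?thesis .
  qed
  then have e1: "\<beta> = map (\<lambda>k. CF \<beta> k (Suc k)) [0..<length \<beta>]" by (intro nth_equalityI) auto
  have e2: "map (\<lambda>k. CF \<beta> ([0..<Suc (length \<beta>)]!k) ([0..<Suc (length \<beta>)]!Suc k)) [0..<length \<beta>]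
     = map (\<lambda>k. CF \<beta> k (Suc k)) [0..<length \<beta>]"
    by (intro map_cong) (auto simp del: upt_Suc)
  have "length \<beta> \<ge> 1" using ne by (cases \<beta>) auto
  then show ?thesis unfolding good_def using e1 e2
    by (simp del: upt_Suc)
qed

lemma reach:
  assumes "rr_step\<^sup>*\<^sup>* \<beta> \<beta>'"
  shows "(\<exists>c. good \<beta> c \<beta>') \<and> B_set \<beta>' = B_set \<beta> \<and> norm0 \<beta>' \<le> norm0 \<beta>"
  using assms
proof (induction rule: rtranclp_induct)
  case base then show ?case using good_init by blast
next
  case (step y z)
  then obtain c where g: "good \<beta> c y" by blast
  have ay: "is_architecture y" using good_arch[OF g] by simp
  show ?case using good_step[OF g step(2)] rr_B_norm[OF ay step(2)] step(3) by auto
qed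

end



theorem proposition4p15:
  fixes \<beta> :: architecture
  assumes "is_architecture \<beta>" and "chainable_arch \<beta>"
  shows "(\<nexists>f. f 0 = \<beta> \<and> (\<forall>n. rr_step (f n) (f (Suc n))))
    \<and> (\<forall>\<beta>'. rr_step\<^sup>*\<^sup>* \<beta> \<beta>' \<and> \<not> redundant_arch \<beta>' \<longrightarrow>
         chainable_arch \<beta>' \<and> \<not> redundant_arch \<beta>' \<and>
         (\<exists>c. sorted_wrt (<) c \<and> length c \<ge> 2 \<and> c!0 = 0 \<and> last c = length \<beta> \<and>
              \<beta>' = map (\<lambda>k. iter_star \<beta> (c!k) (c!Suc k)) [0..<length c - 1]) \<and>
         B_set \<beta>' = B_set \<beta> \<and>
         norm0 \<beta>' \<le> norm0 \<beta>)"
proof (intro conjI)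
  show "\<nexists>f. f 0 = \<beta> \<and> (\<forall>n. rr_step (f n) (f (Suc n)))"
  proof
    assume "\<exists>f. f 0 = \<beta> \<and> (\<forall>n. rr_step (f n) (f (Suc n)))"
    then obtain f where f0: "f 0 = \<beta>" and fs: "\<And>n. rr_step (f n) (f (Suc n))" by blast
    have len: "length (f n) + n = length \<beta>" for n
    proof (induction n)
      case 0 then show ?case using f0 by simp
    next
      case (Suc n)
      have "length (f (Suc n)) = length (f n) - 1" "2 \<le> length (f n)" using rr_len[OF fs[of n]] by auto
      then show ?case using Suc.IH by arith
    qed
    have "2 \<le> length (f (length \<beta>))" using rr_len[OF fs] by blast
    then show False using len[of "length \<beta>"] by simp
  qed
next
  show "\<forall>\<beta>'. rr_step\<^sup>*\<^sup>* \<beta> \<beta>' \<and> \<not> redundant_arch \<beta>' \<longrightarrow>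
         chainable_arch \<beta>' \<and> \<not> redundant_arch \<beta>' \<and>
         (\<exists>c. sorted_wrt (<) c \<and> length c \<ge> 2 \<and> c!0 = 0 \<and> last c = length \<beta> \<and>
              \<beta>' = map (\<lambda>k. iter_star \<beta> (c!k) (c!Suc k)) [0..<length c - 1]) \<and>
         B_set \<beta>' = B_set \<beta> \<and>
         norm0 \<beta>' \<le> norm0 \<beta>"
  proof (intro allI impI)
    fix \<beta>' assume a: "rr_step\<^sup>*\<^sup>* \<beta> \<beta>' \<and> \<not> redundant_arch \<beta>'"
    obtain c where g: "good \<beta> c \<beta>'" and B: "B_set \<beta>' = B_set \<beta>" and N: "norm0 \<beta>' \<le> norm0 \<beta>"
      using reach[OF assms] a by blast
    have ch': "chainable_arch \<beta>'" using good_arch[OF assms g] by simp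
    have s: "sorted_wrt (<) c" and lc: "length c \<ge> 2" and c0: "c!0 = 0" and la: "last c = length \<beta>"
      and b: "\<beta>' = map (\<lambda>k. CF \<beta> (c!k) (c!Suc k)) [0..<length c - 1]"
      using g unfolding good_def by auto
    have "map (\<lambda>k. CF \<beta> (c!k) (c!Suc k)) [0..<length c - 1] = map (\<lambda>k. iter_star \<beta> (c!k) (c!Suc k)) [0..<length c - 1]"
    proof (intro map_cong refl)
      fix k assume "k \<in> set [0..<length c - 1]"
      then have k: "Suc k < length c" by auto
      have "c!k < c!Suc k" using c_mono[OF s _ k] by simp
      moreover have "c!Suc k \<le> length \<beta>" using c_bound[OF s la k] .
      ultimately show "CF \<beta> (c!k) (c!Suc k) = iter_star \<beta> (c!k) (c!Suc k)"
        using iter_closed[OF assms] by simp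
    qed
    then have "\<beta>' = map (\<lambda>k. iter_star \<beta> (c!k) (c!Suc k)) [0..<length c - 1]" using b by simp
    then show "chainable_arch \<beta>' \<and> \<not> redundant_arch \<beta>' \<and>
         (\<exists>c. sorted_wrt (<) c \<and> length c \<ge> 2 \<and> c!0 = 0 \<and> last c = length \<beta> \<and>
              \<beta>' = map (\<lambda>k. iter_star \<beta> (c!k) (c!Suc k)) [0..<length c - 1]) \<and>
         B_set \<beta>' = B_set \<beta> \<and> norm0 \<beta>' \<le> norm0 \<beta>"
      using ch' a s lc c0 la B N by blast
  qed
qed

end
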